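(* Let $v\in\mathbb{R}^2$ and let $f\in\mathrm{CPA}_3$ be a $v$-function with three pieces. Then there are signs $\sigma_1,\sigma_2\in\{-1,1\}$ and functions $g_1,g_2,g_3$, each of which is an affine component of $f$ multiplied by $-1$ or $1$, such that $$f=\sigma_1\max\big(g_1,\sigma_2\max(g_2,g_3)\big).$$
   Context: For $v,u\in\mathbb{R}^2$, $u\ne0$: a line segment $\{v+tu:t\in[0,1]\}$, a ray $\{v+tu:t\ge0\}$ (vertex $v$), a line $\{v+tu:t\in\mathbb{R}\}$. A polygon is a closed $P\subseteq\mathbb{R}^2$ with connected interior whose boundary is the union of finitely many polygonal arcs and cycles (piecewise-linear curves built from segments, rays and lines, homeomorphic to a line or circle), any two meeting in the empty set or a common vertex. A continuous $f:\mathbb{R}^2\to\mathbb{R}$ is continuous piecewise affine (CPA) with admissible pieces $\mathcal{P}$ if $\mathcal{P}$ is a finite set of polygons covering $\mathbb{R}^2$, $P\cap Q=\partial P\cap\partial Q$ for distinct pieces, every vertex of a piece is a vertex of every piece containing it, and $f|_P=f_P$ is affine for each $P$; $f_P$ is the affine component of $P$. $\mathrm{CPA}_3$ is the set of CPA functions admitting an admissible set of $3$ pieces. A CPA function is a $v$-function if $v$ is its only vertex and all its edges are rays. *)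

theory Defs
  imports "HOL-Analysis.Analysis"
begin

type_synonym pt = "real \<times> real"

definition seg2 :: "pt \<Rightarrow> pt \<Rightarrow> pt set" where
  "seg2 v u = {v + t *\<^sub>R u | t. 0 \<le> t \<and> t \<le> 1}"

definition ray2 :: "pt \<Rightarrow> pt \<Rightarrow> pt set" where
  "ray2 v u = {v + t *\<^sub>R u | t. 0 \<le> t}"

definition line2 :: "pt \<Rightarrow> pt \<Rightarrow> pt set" where
  "line2 v u = {v + t *\<^sub>R u | t. True}"

definition is_ray :: "pt set \<Rightarrow> bool" where
  "is_ray E \<longleftrightarrow> (\<exists>v u. u \<noteq> 0 \<and> E = ray2 v u)"

definition linear_piece :: "pt set \<Rightarrow> bool" where
  "linear_piece S \<longleftrightarrow> (\<exists>v u. u \<noteq> 0 \<and> (S = seg2 v u \<or> S = ray2 v u \<or> S = line2 v u))"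

definition polygonal_curve :: "pt set \<Rightarrow> bool" where
  "polygonal_curve C \<longleftrightarrow>
     (\<exists>L. finite L \<and> L \<noteq> {} \<and> (\<forall>S\<in>L. linear_piece S) \<and> C = \<Union>L) \<and>
     (C homeomorphic (UNIV :: real set) \<or> C homeomorphic sphere (0::pt) 1)"

definition vertex_of :: "pt set \<Rightarrow> pt \<Rightarrow> bool" where
  "vertex_of S x \<longleftrightarrow> x \<in> S \<and>
     \<not> (\<exists>e>0. \<exists>a u. u \<noteq> 0 \<and> S \<inter> ball x e = line2 a u \<inter> ball x e)"

definition polygon :: "pt set \<Rightarrow> bool" where
  "polygon P \<longleftrightarrow> closed P \<and> connected (interior P) \<and>
     (\<exists>\<C>. finite \<C> \<and> (\<forall>C\<in>\<C>. polygonal_curve C) \<and> frontier P = \<Union>\<C> \<and>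
        (\<forall>C\<in>\<C>. \<forall>D\<in>\<C>. C \<noteq> D \<longrightarrow>
           C \<inter> D = {} \<or> (\<exists>x. C \<inter> D = {x} \<and> vertex_of C x \<and> vertex_of D x)))"

definition vertices :: "pt set \<Rightarrow> pt set" where
  "vertices P = {x. vertex_of (frontier P) x}"

definition edges :: "pt set \<Rightarrow> pt set set" where
  "edges P = closure ` components (frontier P - vertices P)"

definition affine_fun :: "(pt \<Rightarrow> real) \<Rightarrow> bool" where
  "affine_fun h \<longleftrightarrow> (\<exists>a b c. \<forall>x. h x = a * fst x + b * snd x + c)"

definition admissible :: "(pt \<Rightarrow> real) \<Rightarrow> pt set set \<Rightarrow> bool" where
  "admissible f \<P> \<longleftrightarrow> continuous_on UNIV f \<and> finite \<P> \<and> (\<forall>P\<in>\<P>. polygon P) \<and> \<Union>\<P> = UNIV \<and>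
     (\<forall>P\<in>\<P>. \<forall>Q\<in>\<P>. P \<noteq> Q \<longrightarrow> P \<inter> Q = frontier P \<inter> frontier Q) \<and>
     (\<forall>P\<in>\<P>. \<forall>Q\<in>\<P>. \<forall>x\<in>vertices P. x \<in> Q \<longrightarrow> x \<in> vertices Q) \<and>
     (\<forall>P\<in>\<P>. \<exists>h. affine_fun h \<and> (\<forall>x\<in>P. f x = h x))"

definition affine_component :: "(pt \<Rightarrow> real) \<Rightarrow> pt set \<Rightarrow> (pt \<Rightarrow> real) \<Rightarrow> bool" where
  "affine_component f P h \<longleftrightarrow> affine_fun h \<and> (\<forall>x\<in>P. f x = h x)"

definition CPA3 :: "(pt \<Rightarrow> real) set" where
  "CPA3 = {f. \<exists>\<P>. admissible f \<P> \<and> card \<P> = 3}"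

definition v_function :: "pt \<Rightarrow> (pt \<Rightarrow> real) \<Rightarrow> pt set set \<Rightarrow> bool" where
  "v_function v f \<P> \<longleftrightarrow> admissible f \<P> \<and> (\<Union>P\<in>\<P>. vertices P) = {v} \<and>
     (\<forall>P\<in>\<P>. \<forall>E\<in>edges P. is_ray E)"

end

theory Submission
  imports Defs
begin

definition valc :: "nat \<Rightarrow> pt \<Rightarrow> real" where
  "valc i p = (if i = 0 then fst p else if i = 1 then 0 else snd p)"

definition phi :: "real \<Rightarrow> real \<Rightarrow> real \<Rightarrow> real \<Rightarrow> real \<Rightarrow> real" where
  "phi s1 s2 x y z = s1 * max (s1 * x) (s2 * max (s1 * s2 * y) (s1 * s2 * z))"

definition med3 :: "real \<Rightarrow> real \<Rightarrow> real \<Rightarrow> real" where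
  "med3 x y z = max (min x y) (min (max x y) z)"

lemma connected_two_closed:
  assumes "connected S" "closed A" "closed B" "S \<subseteq> A \<union> B" "A \<inter> B \<inter> S = {}"
  shows "S \<subseteq> A \<or> S \<subseteq> B"
  using assms unfolding connected_closed by blast

lemma const3:
  fixes H f1 f2 f3 :: "pt \<Rightarrow> real"
  assumes S: "connected S" and c: "continuous_on UNIV H" "continuous_on UNIV f1"
    "continuous_on UNIV f2" "continuous_on UNIV f3"
  and sel: "\<forall>x\<in>S. H x = f1 x \<or> H x = f2 x \<or> H x = f3 x"
  and d: "\<forall>x\<in>S. f1 x \<noteq> f2 x \<and> f1 x \<noteq> f3 x \<and> f2 x \<noteq> f3 x"
  shows "(\<forall>x\<in>S. H x = f1 x) \<or> (\<forall>x\<in>S. H x = f2 x) \<or> (\<forall>x\<in>S. H x = f3 x)"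
proof -
  have cl: "closed {x. H x = g x}" if "continuous_on UNIV g" for g
    using closed_Collect_eq[OF c(1) that] .
  have "S \<subseteq> {x. H x = f1 x} \<or> S \<subseteq> {x. H x = f2 x} \<union> {x. H x = f3 x}"
    apply (rule connected_two_closed[OF S cl[OF c(2)] closed_Un[OF cl[OF c(3)] cl[OF c(4)]]])
    using sel d by auto
  moreover have "S \<subseteq> {x. H x = f2 x} \<or> S \<subseteq> {x. H x = f3 x}"
    if "S \<subseteq> {x. H x = f2 x} \<union> {x. H x = f3 x}"
    apply (rule connected_two_closed[OF S cl[OF c(3)] cl[OF c(4)]])
    using that d by auto
  ultimately show ?thesis by blast
qed

lemma ray_limit:
  fixes H s :: "pt \<Rightarrow> real"
  assumes "continuous_on UNIV H" "continuous_on UNIV s"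
    and "\<forall>e>0. H (p + e *\<^sub>R r) = s (p + e *\<^sub>R r)"
  shows "H p = s p"
proof -
  have cl: "closed {x. H x = s x}" using closed_Collect_eq[OF assms(1,2)] .
  have lim: "(\<lambda>n. p + (1 / real (Suc n)) *\<^sub>R r) \<longlonglongrightarrow> p"
  proof -
    have "(\<lambda>n. (1 / real (Suc n)) *\<^sub>R r) \<longlonglongrightarrow> 0 *\<^sub>R r"
      by (intro tendsto_scaleR tendsto_const) (rule LIMSEQ_Suc[OF lim_inverse_n'])
    then show ?thesis using tendsto_add[OF tendsto_const[of p]] by fastforce
  qed
  have mem: "\<And>n. p + (1 / real (Suc n)) *\<^sub>R r \<in> {x. H x = s x}"
    using assms(3) by simp
  have "p \<in> {x. H x = s x}"
    by (rule closed_sequentially[OF cl mem lim])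
  then show ?thesis by simp
qed


definition cellp :: "nat \<Rightarrow> pt \<Rightarrow> bool" where
  "cellp k p = (if k = 0 then fst p \<le> 0 \<and> 0 \<le> snd p
     else if k = 1 then 0 \<le> fst p \<and> fst p \<le> snd p
     else if k = 2 then 0 \<le> snd p \<and> snd p \<le> fst p
     else if k = 3 then snd p \<le> 0 \<and> 0 \<le> fst p
     else if k = 4 then snd p \<le> fst p \<and> fst p \<le> 0
     else fst p \<le> snd p \<and> snd p \<le> 0)"

lemma cover: "\<exists>k<6. cellp k p"
proof -
  have "cellp 0 p \<or> cellp 1 p \<or> cellp 2 p \<or> cellp 3 p \<or> cellp 4 p \<or> cellp 5 p"
    unfolding cellp_def by auto
  then show ?thesis
  proof (elim disjE)
  qed (rule exI, rule conjI[rotated], assumption, simp)+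
qed

lemma mk:
  "\<forall>p. H p = phi s1 s2 (valc i1 p) (valc i2 p) (valc i3 p) \<Longrightarrow> s1 \<in> {-1,1} \<Longrightarrow> s2 \<in> {-1,1} \<Longrightarrow>
   i1 \<in> {0,1,2} \<Longrightarrow> i2 \<in> {0,1,2} \<Longrightarrow> i3 \<in> {0,1,2::nat} \<Longrightarrow>
   (\<exists>s1\<in>{-1,1}. \<exists>s2\<in>{-1,1}. \<exists>i1\<in>{0,1,2}. \<exists>i2\<in>{0,1,2}. \<exists>i3\<in>{0,1,2::nat}.
      \<forall>p. H p = phi s1 s2 (valc i1 p) (valc i2 p) (valc i3 p))"
  by blast

lemma wit0:
  assumes "l 0 = (0::nat)" "l 1 = (0::nat)" "l 2 = (0::nat)" "l 3 = (0::nat)" "l 4 = (0::nat)" "l 5 = (0::nat)"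
  shows "\<forall>k<6. \<forall>p. cellp k p \<longrightarrow> phi (-1) (-1) (valc 0 p) (valc 0 p) (valc 0 p) = valc (l k) p"
proof (intro allI impI)
  fix k p assume "k < (6::nat)" "cellp k p"
  then have "k = 0 \<or> k = 1 \<or> k = 2 \<or> k = 3 \<or> k = 4 \<or> k = 5" by auto
  then show "phi (-1) (-1) (valc 0 p) (valc 0 p) (valc 0 p) = valc (l k) p"
    using assms \<open>cellp k p\<close> by (elim disjE) (auto simp: cellp_def valc_def phi_def max_def)
qed

lemma wit1:
  assumes "l 0 = (0::nat)" "l 1 = (0::nat)" "l 2 = (2::nat)" "l 3 = (1::nat)" "l 4 = (0::nat)" "l 5 = (0::nat)"
  shows "\<forall>k<6. \<forall>p. cellp k p \<longrightarrow> phi (-1) (-1) (valc 0 p) (valc 1 p) (valc 2 p) = valc (l k) p"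
proof (intro allI impI)
  fix k p assume "k < (6::nat)" "cellp k p"
  then have "k = 0 \<or> k = 1 \<or> k = 2 \<or> k = 3 \<or> k = 4 \<or> k = 5" by auto
  then show "phi (-1) (-1) (valc 0 p) (valc 1 p) (valc 2 p) = valc (l k) p"
    using assms \<open>cellp k p\<close> by (elim disjE) (auto simp: cellp_def valc_def phi_def max_def)
qed

lemma wit2:
  assumes "l 0 = (0::nat)" "l 1 = (0::nat)" "l 2 = (2::nat)" "l 3 = (2::nat)" "l 4 = (2::nat)" "l 5 = (0::nat)"
  shows "\<forall>k<6. \<forall>p. cellp k p \<longrightarrow> phi (-1) (-1) (valc 0 p) (valc 2 p) (valc 2 p) = valc (l k) p"
proof (intro allI impI)
  fix k p assume "k < (6::nat)" "cellp k p"
  then have "k = 0 \<or> k = 1 \<or> k = 2 \<or> k = 3 \<or> k = 4 \<or> k = 5" by auto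
  then show "phi (-1) (-1) (valc 0 p) (valc 2 p) (valc 2 p) = valc (l k) p"
    using assms \<open>cellp k p\<close> by (elim disjE) (auto simp: cellp_def valc_def phi_def max_def)
qed

lemma wit3:
  assumes "l 0 = (0::nat)" "l 1 = (1::nat)" "l 2 = (1::nat)" "l 3 = (1::nat)" "l 4 = (0::nat)" "l 5 = (0::nat)"
  shows "\<forall>k<6. \<forall>p. cellp k p \<longrightarrow> phi (-1) (-1) (valc 0 p) (valc 1 p) (valc 1 p) = valc (l k) p"
proof (intro allI impI)
  fix k p assume "k < (6::nat)" "cellp k p"
  then have "k = 0 \<or> k = 1 \<or> k = 2 \<or> k = 3 \<or> k = 4 \<or> k = 5" by auto
  then show "phi (-1) (-1) (valc 0 p) (valc 1 p) (valc 1 p) = valc (l k) p"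
    using assms \<open>cellp k p\<close> by (elim disjE) (auto simp: cellp_def valc_def phi_def max_def)
qed

lemma wit4:
  assumes "l 0 = (0::nat)" "l 1 = (1::nat)" "l 2 = (1::nat)" "l 3 = (2::nat)" "l 4 = (2::nat)" "l 5 = (0::nat)"
  shows "\<forall>k<6. \<forall>p. cellp k p \<longrightarrow> phi (-1) (1) (valc 0 p) (valc 1 p) (valc 2 p) = valc (l k) p"
proof (intro allI impI)
  fix k p assume "k < (6::nat)" "cellp k p"
  then have "k = 0 \<or> k = 1 \<or> k = 2 \<or> k = 3 \<or> k = 4 \<or> k = 5" by auto
  then show "phi (-1) (1) (valc 0 p) (valc 1 p) (valc 2 p) = valc (l k) p"
    using assms \<open>cellp k p\<close> by (elim disjE) (auto simp: cellp_def valc_def phi_def max_def)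
qed

lemma wit5:
  assumes "l 0 = (1::nat)" "l 1 = (0::nat)" "l 2 = (0::nat)" "l 3 = (0::nat)" "l 4 = (0::nat)" "l 5 = (2::nat)"
  shows "\<forall>k<6. \<forall>p. cellp k p \<longrightarrow> phi (1) (-1) (valc 0 p) (valc 1 p) (valc 2 p) = valc (l k) p"
proof (intro allI impI)
  fix k p assume "k < (6::nat)" "cellp k p"
  then have "k = 0 \<or> k = 1 \<or> k = 2 \<or> k = 3 \<or> k = 4 \<or> k = 5" by auto
  then show "phi (1) (-1) (valc 0 p) (valc 1 p) (valc 2 p) = valc (l k) p"
    using assms \<open>cellp k p\<close> by (elim disjE) (auto simp: cellp_def valc_def phi_def max_def)
qed

lemma wit6:
  assumes "l 0 = (1::nat)" "l 1 = (0::nat)" "l 2 = (0::nat)" "l 3 = (0::nat)" "l 4 = (1::nat)" "l 5 = (1::nat)"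
  shows "\<forall>k<6. \<forall>p. cellp k p \<longrightarrow> phi (1) (-1) (valc 0 p) (valc 1 p) (valc 1 p) = valc (l k) p"
proof (intro allI impI)
  fix k p assume "k < (6::nat)" "cellp k p"
  then have "k = 0 \<or> k = 1 \<or> k = 2 \<or> k = 3 \<or> k = 4 \<or> k = 5" by auto
  then show "phi (1) (-1) (valc 0 p) (valc 1 p) (valc 1 p) = valc (l k) p"
    using assms \<open>cellp k p\<close> by (elim disjE) (auto simp: cellp_def valc_def phi_def max_def)
qed

lemma wit8:
  assumes "l 0 = (1::nat)" "l 1 = (0::nat)" "l 2 = (2::nat)" "l 3 = (1::nat)" "l 4 = (1::nat)" "l 5 = (1::nat)"
  shows "\<forall>k<6. \<forall>p. cellp k p \<longrightarrow> phi (1) (-1) (valc 1 p) (valc 0 p) (valc 2 p) = valc (l k) p"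
proof (intro allI impI)
  fix k p assume "k < (6::nat)" "cellp k p"
  then have "k = 0 \<or> k = 1 \<or> k = 2 \<or> k = 3 \<or> k = 4 \<or> k = 5" by auto
  then show "phi (1) (-1) (valc 1 p) (valc 0 p) (valc 2 p) = valc (l k) p"
    using assms \<open>cellp k p\<close> by (elim disjE) (auto simp: cellp_def valc_def phi_def max_def)
qed

lemma wit9:
  assumes "l 0 = (1::nat)" "l 1 = (0::nat)" "l 2 = (2::nat)" "l 3 = (2::nat)" "l 4 = (2::nat)" "l 5 = (2::nat)"
  shows "\<forall>k<6. \<forall>p. cellp k p \<longrightarrow> phi (-1) (-1) (valc 2 p) (valc 0 p) (valc 1 p) = valc (l k) p"
proof (intro allI impI)
  fix k p assume "k < (6::nat)" "cellp k p"
  then have "k = 0 \<or> k = 1 \<or> k = 2 \<or> k = 3 \<or> k = 4 \<or> k = 5" by auto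
  then show "phi (-1) (-1) (valc 2 p) (valc 0 p) (valc 1 p) = valc (l k) p"
    using assms \<open>cellp k p\<close> by (elim disjE) (auto simp: cellp_def valc_def phi_def max_def)
qed

lemma wit10:
  assumes "l 0 = (1::nat)" "l 1 = (1::nat)" "l 2 = (1::nat)" "l 3 = (1::nat)" "l 4 = (0::nat)" "l 5 = (2::nat)"
  shows "\<forall>k<6. \<forall>p. cellp k p \<longrightarrow> phi (-1) (-1) (valc 1 p) (valc 0 p) (valc 2 p) = valc (l k) p"
proof (intro allI impI)
  fix k p assume "k < (6::nat)" "cellp k p"
  then have "k = 0 \<or> k = 1 \<or> k = 2 \<or> k = 3 \<or> k = 4 \<or> k = 5" by auto
  then show "phi (-1) (-1) (valc 1 p) (valc 0 p) (valc 2 p) = valc (l k) p"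
    using assms \<open>cellp k p\<close> by (elim disjE) (auto simp: cellp_def valc_def phi_def max_def)
qed

lemma wit11:
  assumes "l 0 = (1::nat)" "l 1 = (1::nat)" "l 2 = (1::nat)" "l 3 = (1::nat)" "l 4 = (1::nat)" "l 5 = (1::nat)"
  shows "\<forall>k<6. \<forall>p. cellp k p \<longrightarrow> phi (-1) (-1) (valc 1 p) (valc 0 p) (valc 1 p) = valc (l k) p"
proof (intro allI impI)
  fix k p assume "k < (6::nat)" "cellp k p"
  then have "k = 0 \<or> k = 1 \<or> k = 2 \<or> k = 3 \<or> k = 4 \<or> k = 5" by auto
  then show "phi (-1) (-1) (valc 1 p) (valc 0 p) (valc 1 p) = valc (l k) p"
    using assms \<open>cellp k p\<close> by (elim disjE) (auto simp: cellp_def valc_def phi_def max_def)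
qed

lemma wit12:
  assumes "l 0 = (1::nat)" "l 1 = (1::nat)" "l 2 = (1::nat)" "l 3 = (2::nat)" "l 4 = (2::nat)" "l 5 = (2::nat)"
  shows "\<forall>k<6. \<forall>p. cellp k p \<longrightarrow> phi (-1) (-1) (valc 1 p) (valc 2 p) (valc 2 p) = valc (l k) p"
proof (intro allI impI)
  fix k p assume "k < (6::nat)" "cellp k p"
  then have "k = 0 \<or> k = 1 \<or> k = 2 \<or> k = 3 \<or> k = 4 \<or> k = 5" by auto
  then show "phi (-1) (-1) (valc 1 p) (valc 2 p) (valc 2 p) = valc (l k) p"
    using assms \<open>cellp k p\<close> by (elim disjE) (auto simp: cellp_def valc_def phi_def max_def)
qed

lemma wit13:
  assumes "l 0 = (2::nat)" "l 1 = (2::nat)" "l 2 = (0::nat)" "l 3 = (0::nat)" "l 4 = (0::nat)" "l 5 = (2::nat)"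
  shows "\<forall>k<6. \<forall>p. cellp k p \<longrightarrow> phi (1) (-1) (valc 0 p) (valc 2 p) (valc 2 p) = valc (l k) p"
proof (intro allI impI)
  fix k p assume "k < (6::nat)" "cellp k p"
  then have "k = 0 \<or> k = 1 \<or> k = 2 \<or> k = 3 \<or> k = 4 \<or> k = 5" by auto
  then show "phi (1) (-1) (valc 0 p) (valc 2 p) (valc 2 p) = valc (l k) p"
    using assms \<open>cellp k p\<close> by (elim disjE) (auto simp: cellp_def valc_def phi_def max_def)
qed

lemma wit14:
  assumes "l 0 = (2::nat)" "l 1 = (2::nat)" "l 2 = (0::nat)" "l 3 = (0::nat)" "l 4 = (1::nat)" "l 5 = (1::nat)"
  shows "\<forall>k<6. \<forall>p. cellp k p \<longrightarrow> phi (1) (1) (valc 0 p) (valc 1 p) (valc 2 p) = valc (l k) p"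
proof (intro allI impI)
  fix k p assume "k < (6::nat)" "cellp k p"
  then have "k = 0 \<or> k = 1 \<or> k = 2 \<or> k = 3 \<or> k = 4 \<or> k = 5" by auto
  then show "phi (1) (1) (valc 0 p) (valc 1 p) (valc 2 p) = valc (l k) p"
    using assms \<open>cellp k p\<close> by (elim disjE) (auto simp: cellp_def valc_def phi_def max_def)
qed

lemma wit15:
  assumes "l 0 = (2::nat)" "l 1 = (2::nat)" "l 2 = (2::nat)" "l 3 = (1::nat)" "l 4 = (0::nat)" "l 5 = (2::nat)"
  shows "\<forall>k<6. \<forall>p. cellp k p \<longrightarrow> phi (1) (-1) (valc 2 p) (valc 0 p) (valc 1 p) = valc (l k) p"
proof (intro allI impI)
  fix k p assume "k < (6::nat)" "cellp k p"
  then have "k = 0 \<or> k = 1 \<or> k = 2 \<or> k = 3 \<or> k = 4 \<or> k = 5" by auto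
  then show "phi (1) (-1) (valc 2 p) (valc 0 p) (valc 1 p) = valc (l k) p"
    using assms \<open>cellp k p\<close> by (elim disjE) (auto simp: cellp_def valc_def phi_def max_def)
qed

lemma wit16:
  assumes "l 0 = (2::nat)" "l 1 = (2::nat)" "l 2 = (2::nat)" "l 3 = (1::nat)" "l 4 = (1::nat)" "l 5 = (1::nat)"
  shows "\<forall>k<6. \<forall>p. cellp k p \<longrightarrow> phi (1) (-1) (valc 1 p) (valc 2 p) (valc 2 p) = valc (l k) p"
proof (intro allI impI)
  fix k p assume "k < (6::nat)" "cellp k p"
  then have "k = 0 \<or> k = 1 \<or> k = 2 \<or> k = 3 \<or> k = 4 \<or> k = 5" by auto
  then show "phi (1) (-1) (valc 1 p) (valc 2 p) (valc 2 p) = valc (l k) p"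
    using assms \<open>cellp k p\<close> by (elim disjE) (auto simp: cellp_def valc_def phi_def max_def)
qed

lemma wit17:
  assumes "l 0 = (2::nat)" "l 1 = (2::nat)" "l 2 = (2::nat)" "l 3 = (2::nat)" "l 4 = (2::nat)" "l 5 = (2::nat)"
  shows "\<forall>k<6. \<forall>p. cellp k p \<longrightarrow> phi (-1) (-1) (valc 2 p) (valc 0 p) (valc 2 p) = valc (l k) p"
proof (intro allI impI)
  fix k p assume "k < (6::nat)" "cellp k p"
  then have "k = 0 \<or> k = 1 \<or> k = 2 \<or> k = 3 \<or> k = 4 \<or> k = 5" by auto
  then show "phi (-1) (-1) (valc 2 p) (valc 0 p) (valc 2 p) = valc (l k) p"
    using assms \<open>cellp k p\<close> by (elim disjE) (auto simp: cellp_def valc_def phi_def max_def)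
qed


lemma witmed:
  assumes "l 0 = (1::nat)" "l 1 = (0::nat)" "l 2 = (2::nat)" "l 3 = (1::nat)" "l 4 = (0::nat)" "l 5 = (2::nat)"
  shows "\<forall>k<6. \<forall>p. cellp k p \<longrightarrow> med3 (fst p) 0 (snd p) = valc (l k) p"
proof (intro allI impI)
  fix k p assume "k < (6::nat)" "cellp k p"
  then have "k = 0 \<or> k = 1 \<or> k = 2 \<or> k = 3 \<or> k = 4 \<or> k = 5" by auto
  then show "med3 (fst p) 0 (snd p) = valc (l k) p"
    using assms \<open>cellp k p\<close> by (elim disjE) (auto simp: cellp_def valc_def med3_def max_def min_def)
qed


lemma Tlem0:
  "\<forall>a\<in>{0::nat,1,2}. \<forall>b\<in>{0::nat,1,2}. \<forall>c\<in>{0::nat,1,2}. \<forall>d\<in>{0::nat,1,2}. \<forall>e\<in>{0::nat,1,2}. \<forall>f\<in>{0::nat,1,2}.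
   (a = 2) = (b = 2) \<longrightarrow> (b = 1) = (c = 1) \<longrightarrow> (c = 0) = (d = 0) \<longrightarrow> (d = 2) = (e = 2) \<longrightarrow> (e = 1) = (f = 1) \<longrightarrow> (f = 0) = (a = 0) \<longrightarrow>
   (a,b,c,d,e,f) \<in> {(0,0,0,0,0,0), (0,0,2,1,0,0), (0,0,2,2,2,0), (0,1,1,1,0,0), (0,1,1,2,2,0), (1,0,0,0,0,2), (1,0,0,0,1,1), (1,0,2,1,0,2), (1,0,2,1,1,1), (1,0,2,2,2,2), (1,1,1,1,0,2), (1,1,1,1,1,1), (1,1,1,2,2,2), (2,2,0,0,0,2), (2,2,0,0,1,1), (2,2,2,1,0,2), (2,2,2,1,1,1), (2,2,2,2,2,2)}"
  by simp

lemma comb: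
  fixes H :: "pt \<Rightarrow> real" and l :: "nat \<Rightarrow> nat"
  assumes L: "\<forall>k<6. l k \<in> {0,1,2}" and h: "\<forall>k<6. \<forall>p. cellp k p \<longrightarrow> H p = valc (l k) p"
  shows "(\<forall>p. H p = med3 (fst p) 0 (snd p)) \<or>
    (\<exists>s1\<in>{-1,1}. \<exists>s2\<in>{-1,1}. \<exists>i1\<in>{0,1,2}. \<exists>i2\<in>{0,1,2}. \<exists>i3\<in>{0,1,2::nat}.
      \<forall>p. H p = phi s1 s2 (valc i1 p) (valc i2 p) (valc i3 p))"
proof -
  have glue: "\<forall>p. H p = \<Phi> p" if "\<forall>k<6. \<forall>p. cellp k p \<longrightarrow> \<Phi> p = valc (l k) p" for \<Phi>
  proof
    fix p
    obtain k where "k < 6" "cellp k p" using cover by blast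
    then have "H p = valc (l k) p" "\<Phi> p = valc (l k) p" using h that by blast+
    then show "H p = \<Phi> p" by simp
  qed
  have hb: "H p = valc (l k) p" if "k < 6" "cellp k p" for k p using h that by blast
  have b0: "valc (l 0) (0,1) = valc (l 1) (0,1)" using hb[of 0 "(0,1)"] hb[of 1 "(0,1)"] by (simp add: cellp_def)
  have b1: "valc (l 1) (1,1) = valc (l 2) (1,1)" using hb[of 1 "(1,1)"] hb[of 2 "(1,1)"] by (simp add: cellp_def)
  have b2: "valc (l 2) (1,0) = valc (l 3) (1,0)" using hb[of 2 "(1,0)"] hb[of 3 "(1,0)"] by (simp add: cellp_def)
  have b3: "valc (l 3) (0,-1) = valc (l 4) (0,-1)" using hb[of 3 "(0,-1)"] hb[of 4 "(0,-1)"] by (simp add: cellp_def)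
  have b4: "valc (l 4) (-1,-1) = valc (l 5) (-1,-1)" using hb[of 4 "(-1,-1)"] hb[of 5 "(-1,-1)"] by (simp add: cellp_def)
  have b5: "valc (l 5) (-1,0) = valc (l 0) (-1,0)" using hb[of 5 "(-1,0)"] hb[of 0 "(-1,0)"] by (simp add: cellp_def)
  have Ls: "l 0 \<in> {0,1,2}" "l 1 \<in> {0,1,2}" "l 2 \<in> {0,1,2}" "l 3 \<in> {0,1,2}" "l 4 \<in> {0,1,2}" "l 5 \<in> {0,1,2}"
    using L by auto
  have c0: "(l 0 = 2) = (l 1 = 2)" using b0 Ls(1,2) by (auto simp: valc_def)
  have c1: "(l 1 = 1) = (l 2 = 1)" using b1 Ls(2,3) by (auto simp: valc_def)
  have c2: "(l 2 = 0) = (l 3 = 0)" using b2 Ls(3,4) by (auto simp: valc_def)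
  have c3: "(l 3 = 2) = (l 4 = 2)" using b3 Ls(4,5) by (auto simp: valc_def)
  have c4: "(l 4 = 1) = (l 5 = 1)" using b4 Ls(5,6) by (auto simp: valc_def)
  have c5: "(l 5 = 0) = (l 0 = 0)" using b5 Ls(6,1) by (auto simp: valc_def)
  have T: "(l 0, l 1, l 2, l 3, l 4, l 5) \<in> {(0,0,0,0,0,0), (0,0,2,1,0,0), (0,0,2,2,2,0), (0,1,1,1,0,0), (0,1,1,2,2,0), (1,0,0,0,0,2), (1,0,0,0,1,1), (1,0,2,1,0,2), (1,0,2,1,1,1), (1,0,2,2,2,2), (1,1,1,1,0,2), (1,1,1,1,1,1), (1,1,1,2,2,2), (2,2,0,0,0,2), (2,2,0,0,1,1), (2,2,2,1,0,2), (2,2,2,1,1,1), (2,2,2,2,2,2)}"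
    using Tlem0[rule_format, OF Ls c0 c1 c2 c3 c4 c5] .
  have m0: "(l 0, l 1, l 2, l 3, l 4, l 5) = (0,0,0,0,0,0) \<Longrightarrow> ?thesis"
  proof -
    assume "(l 0, l 1, l 2, l 3, l 4, l 5) = (0,0,0,0,0,0)"
    then have "\<forall>p. H p = phi (-1) (-1) (valc 0 p) (valc 0 p) (valc 0 p)"
      using glue[OF wit0[of l]] by simp
    then show ?thesis by (intro disjI2 mk) auto
  qed
  have m1: "(l 0, l 1, l 2, l 3, l 4, l 5) = (0,0,2,1,0,0) \<Longrightarrow> ?thesis"
  proof -
    assume "(l 0, l 1, l 2, l 3, l 4, l 5) = (0,0,2,1,0,0)"
    then have "\<forall>p. H p = phi (-1) (-1) (valc 0 p) (valc 1 p) (valc 2 p)"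
      using glue[OF wit1[of l]] by simp
    then show ?thesis by (intro disjI2 mk) auto
  qed
  have m2: "(l 0, l 1, l 2, l 3, l 4, l 5) = (0,0,2,2,2,0) \<Longrightarrow> ?thesis"
  proof -
    assume "(l 0, l 1, l 2, l 3, l 4, l 5) = (0,0,2,2,2,0)"
    then have "\<forall>p. H p = phi (-1) (-1) (valc 0 p) (valc 2 p) (valc 2 p)"
      using glue[OF wit2[of l]] by simp
    then show ?thesis by (intro disjI2 mk) auto
  qed
  have m3: "(l 0, l 1, l 2, l 3, l 4, l 5) = (0,1,1,1,0,0) \<Longrightarrow> ?thesis"
  proof -
    assume "(l 0, l 1, l 2, l 3, l 4, l 5) = (0,1,1,1,0,0)"
    then have "\<forall>p. H p = phi (-1) (-1) (valc 0 p) (valc 1 p) (valc 1 p)"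
      using glue[OF wit3[of l]] by simp
    then show ?thesis by (intro disjI2 mk) auto
  qed
  have m4: "(l 0, l 1, l 2, l 3, l 4, l 5) = (0,1,1,2,2,0) \<Longrightarrow> ?thesis"
  proof -
    assume "(l 0, l 1, l 2, l 3, l 4, l 5) = (0,1,1,2,2,0)"
    then have "\<forall>p. H p = phi (-1) (1) (valc 0 p) (valc 1 p) (valc 2 p)"
      using glue[OF wit4[of l]] by simp
    then show ?thesis by (intro disjI2 mk) auto
  qed
  have m5: "(l 0, l 1, l 2, l 3, l 4, l 5) = (1,0,0,0,0,2) \<Longrightarrow> ?thesis"
  proof -
    assume "(l 0, l 1, l 2, l 3, l 4, l 5) = (1,0,0,0,0,2)"
    then have "\<forall>p. H p = phi (1) (-1) (valc 0 p) (valc 1 p) (valc 2 p)"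
      using glue[OF wit5[of l]] by simp
    then show ?thesis by (intro disjI2 mk) auto
  qed
  have m6: "(l 0, l 1, l 2, l 3, l 4, l 5) = (1,0,0,0,1,1) \<Longrightarrow> ?thesis"
  proof -
    assume "(l 0, l 1, l 2, l 3, l 4, l 5) = (1,0,0,0,1,1)"
    then have "\<forall>p. H p = phi (1) (-1) (valc 0 p) (valc 1 p) (valc 1 p)"
      using glue[OF wit6[of l]] by simp
    then show ?thesis by (intro disjI2 mk) auto
  qed
  have m7: "(l 0, l 1, l 2, l 3, l 4, l 5) = (1,0,2,1,0,2) \<Longrightarrow> ?thesis"
  proof -
    assume "(l 0, l 1, l 2, l 3, l 4, l 5) = (1,0,2,1,0,2)"
    then have "\<forall>p. H p = med3 (fst p) 0 (snd p)"
      using glue[OF witmed[of l]] by simp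
    then show ?thesis by (rule disjI1)
  qed
  have m8: "(l 0, l 1, l 2, l 3, l 4, l 5) = (1,0,2,1,1,1) \<Longrightarrow> ?thesis"
  proof -
    assume "(l 0, l 1, l 2, l 3, l 4, l 5) = (1,0,2,1,1,1)"
    then have "\<forall>p. H p = phi (1) (-1) (valc 1 p) (valc 0 p) (valc 2 p)"
      using glue[OF wit8[of l]] by simp
    then show ?thesis by (intro disjI2 mk) auto
  qed
  have m9: "(l 0, l 1, l 2, l 3, l 4, l 5) = (1,0,2,2,2,2) \<Longrightarrow> ?thesis"
  proof -
    assume "(l 0, l 1, l 2, l 3, l 4, l 5) = (1,0,2,2,2,2)"
    then have "\<forall>p. H p = phi (-1) (-1) (valc 2 p) (valc 0 p) (valc 1 p)"
      using glue[OF wit9[of l]] by simp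
    then show ?thesis by (intro disjI2 mk) auto
  qed
  have m10: "(l 0, l 1, l 2, l 3, l 4, l 5) = (1,1,1,1,0,2) \<Longrightarrow> ?thesis"
  proof -
    assume "(l 0, l 1, l 2, l 3, l 4, l 5) = (1,1,1,1,0,2)"
    then have "\<forall>p. H p = phi (-1) (-1) (valc 1 p) (valc 0 p) (valc 2 p)"
      using glue[OF wit10[of l]] by simp
    then show ?thesis by (intro disjI2 mk) auto
  qed
  have m11: "(l 0, l 1, l 2, l 3, l 4, l 5) = (1,1,1,1,1,1) \<Longrightarrow> ?thesis"
  proof -
    assume "(l 0, l 1, l 2, l 3, l 4, l 5) = (1,1,1,1,1,1)"
    then have "\<forall>p. H p = phi (-1) (-1) (valc 1 p) (valc 0 p) (valc 1 p)"
      using glue[OF wit11[of l]] by simp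
    then show ?thesis by (intro disjI2 mk) auto
  qed
  have m12: "(l 0, l 1, l 2, l 3, l 4, l 5) = (1,1,1,2,2,2) \<Longrightarrow> ?thesis"
  proof -
    assume "(l 0, l 1, l 2, l 3, l 4, l 5) = (1,1,1,2,2,2)"
    then have "\<forall>p. H p = phi (-1) (-1) (valc 1 p) (valc 2 p) (valc 2 p)"
      using glue[OF wit12[of l]] by simp
    then show ?thesis by (intro disjI2 mk) auto
  qed
  have m13: "(l 0, l 1, l 2, l 3, l 4, l 5) = (2,2,0,0,0,2) \<Longrightarrow> ?thesis"
  proof -
    assume "(l 0, l 1, l 2, l 3, l 4, l 5) = (2,2,0,0,0,2)"
    then have "\<forall>p. H p = phi (1) (-1) (valc 0 p) (valc 2 p) (valc 2 p)"
      using glue[OF wit13[of l]] by simp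
    then show ?thesis by (intro disjI2 mk) auto
  qed
  have m14: "(l 0, l 1, l 2, l 3, l 4, l 5) = (2,2,0,0,1,1) \<Longrightarrow> ?thesis"
  proof -
    assume "(l 0, l 1, l 2, l 3, l 4, l 5) = (2,2,0,0,1,1)"
    then have "\<forall>p. H p = phi (1) (1) (valc 0 p) (valc 1 p) (valc 2 p)"
      using glue[OF wit14[of l]] by simp
    then show ?thesis by (intro disjI2 mk) auto
  qed
  have m15: "(l 0, l 1, l 2, l 3, l 4, l 5) = (2,2,2,1,0,2) \<Longrightarrow> ?thesis"
  proof -
    assume "(l 0, l 1, l 2, l 3, l 4, l 5) = (2,2,2,1,0,2)"
    then have "\<forall>p. H p = phi (1) (-1) (valc 2 p) (valc 0 p) (valc 1 p)"
      using glue[OF wit15[of l]] by simp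
    then show ?thesis by (intro disjI2 mk) auto
  qed
  have m16: "(l 0, l 1, l 2, l 3, l 4, l 5) = (2,2,2,1,1,1) \<Longrightarrow> ?thesis"
  proof -
    assume "(l 0, l 1, l 2, l 3, l 4, l 5) = (2,2,2,1,1,1)"
    then have "\<forall>p. H p = phi (1) (-1) (valc 1 p) (valc 2 p) (valc 2 p)"
      using glue[OF wit16[of l]] by simp
    then show ?thesis by (intro disjI2 mk) auto
  qed
  have m17: "(l 0, l 1, l 2, l 3, l 4, l 5) = (2,2,2,2,2,2) \<Longrightarrow> ?thesis"
  proof -
    assume "(l 0, l 1, l 2, l 3, l 4, l 5) = (2,2,2,2,2,2)"
    then have "\<forall>p. H p = phi (-1) (-1) (valc 2 p) (valc 0 p) (valc 2 p)"
      using glue[OF wit17[of l]] by simp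
    then show ?thesis by (intro disjI2 mk) auto
  qed
  from T show ?thesis unfolding insert_iff empty_iff
  proof (elim disjE)
    assume "(l 0, l 1, l 2, l 3, l 4, l 5) = (0,0,0,0,0,0)" then show ?thesis by (rule m0)
  next
    assume "(l 0, l 1, l 2, l 3, l 4, l 5) = (0,0,2,1,0,0)" then show ?thesis by (rule m1)
  next
    assume "(l 0, l 1, l 2, l 3, l 4, l 5) = (0,0,2,2,2,0)" then show ?thesis by (rule m2)
  next
    assume "(l 0, l 1, l 2, l 3, l 4, l 5) = (0,1,1,1,0,0)" then show ?thesis by (rule m3)
  next
    assume "(l 0, l 1, l 2, l 3, l 4, l 5) = (0,1,1,2,2,0)" then show ?thesis by (rule m4)
  next
    assume "(l 0, l 1, l 2, l 3, l 4, l 5) = (1,0,0,0,0,2)" then show ?thesis by (rule m5)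
  next
    assume "(l 0, l 1, l 2, l 3, l 4, l 5) = (1,0,0,0,1,1)" then show ?thesis by (rule m6)
  next
    assume "(l 0, l 1, l 2, l 3, l 4, l 5) = (1,0,2,1,0,2)" then show ?thesis by (rule m7)
  next
    assume "(l 0, l 1, l 2, l 3, l 4, l 5) = (1,0,2,1,1,1)" then show ?thesis by (rule m8)
  next
    assume "(l 0, l 1, l 2, l 3, l 4, l 5) = (1,0,2,2,2,2)" then show ?thesis by (rule m9)
  next
    assume "(l 0, l 1, l 2, l 3, l 4, l 5) = (1,1,1,1,0,2)" then show ?thesis by (rule m10)
  next
    assume "(l 0, l 1, l 2, l 3, l 4, l 5) = (1,1,1,1,1,1)" then show ?thesis by (rule m11)
  next
    assume "(l 0, l 1, l 2, l 3, l 4, l 5) = (1,1,1,2,2,2)" then show ?thesis by (rule m12)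
  next
    assume "(l 0, l 1, l 2, l 3, l 4, l 5) = (2,2,0,0,0,2)" then show ?thesis by (rule m13)
  next
    assume "(l 0, l 1, l 2, l 3, l 4, l 5) = (2,2,0,0,1,1)" then show ?thesis by (rule m14)
  next
    assume "(l 0, l 1, l 2, l 3, l 4, l 5) = (2,2,2,1,0,2)" then show ?thesis by (rule m15)
  next
    assume "(l 0, l 1, l 2, l 3, l 4, l 5) = (2,2,2,1,1,1)" then show ?thesis by (rule m16)
  next
    assume "(l 0, l 1, l 2, l 3, l 4, l 5) = (2,2,2,2,2,2)" then show ?thesis by (rule m17)
  qed simp
qed


lemma hs2_convex:
  "convex {p::pt. a1 * fst p + b1 * snd p < c1 \<and> a2 * fst p + b2 * snd p < c2}"
proof -
  have e: "{p::pt. a * fst p + b * snd p < c} = {p. inner (a,b) p < c}" for a b c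
    by (auto simp: inner_prod_def)
  have "{p::pt. a1 * fst p + b1 * snd p < c1 \<and> a2 * fst p + b2 * snd p < c2} =
     {p::pt. a1 * fst p + b1 * snd p < c1} \<inter> {p::pt. a2 * fst p + b2 * snd p < c2}" by auto
  then show ?thesis unfolding e using convex_Int convex_halfspace_lt by metis
qed

lemma valc_cont: "continuous_on UNIV (valc l)"
proof -
  have "valc l = (if l = 0 then fst else if l = 1 then (\<lambda>p. 0) else snd)"
    by (auto simp: valc_def fun_eq_iff)
  then show ?thesis by (auto intro!: continuous_intros)
qed

lemma cell_label:
  fixes H :: "pt \<Rightarrow> real" and U :: "pt set"
  assumes H: "continuous_on UNIV H" and sel: "\<forall>p. H p = fst p \<or> H p = 0 \<or> H p = snd p"
  and U: "convex U" and dist: "\<forall>p\<in>U. fst p \<noteq> 0 \<and> fst p \<noteq> snd p \<and> 0 \<noteq> snd p"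
  and Cdir: "\<forall>p. C p \<longrightarrow> (\<forall>e>0. p + e *\<^sub>R r \<in> U)"
  shows "\<exists>l\<in>{0,1,2::nat}. \<forall>p. C p \<longrightarrow> H p = valc l p"
proof -
  have cf: "continuous_on UNIV (fst::pt\<Rightarrow>real)" "continuous_on UNIV (\<lambda>p::pt. 0::real)"
    "continuous_on UNIV (snd::pt\<Rightarrow>real)" by (intro continuous_intros)+
  have ext: "\<forall>p. C p \<longrightarrow> H p = valc l p" if "\<forall>x\<in>U. H x = valc l x" for l
  proof (intro allI impI)
    fix p assume "C p"
    then have "\<forall>e>0. H (p + e *\<^sub>R r) = valc l (p + e *\<^sub>R r)" using Cdir that by blast
    then show "H p = valc l p" by (rule ray_limit[OF H valc_cont])
  qed
  have "(\<forall>x\<in>U. H x = fst x) \<or> (\<forall>x\<in>U. H x = 0) \<or> (\<forall>x\<in>U. H x = snd x)"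
    using const3[OF convex_connected[OF U] H cf] sel dist by blast
  then show ?thesis
  proof (elim disjE)
    assume "\<forall>x\<in>U. H x = fst x" then show ?thesis using ext[of 0] by (auto simp: valc_def)
  next
    assume "\<forall>x\<in>U. H x = 0" then show ?thesis using ext[of 1] by (auto simp: valc_def)
  next
    assume "\<forall>x\<in>U. H x = snd x" then show ?thesis using ext[of 2] by (auto simp: valc_def)
  qed
qed

lemma canonical:
  fixes H :: "pt \<Rightarrow> real"
  assumes H: "continuous_on UNIV H" and sel: "\<forall>p. H p = fst p \<or> H p = 0 \<or> H p = snd p"
  shows "(\<forall>p. H p = med3 (fst p) 0 (snd p)) \<or>
    (\<exists>s1\<in>{-1,1}. \<exists>s2\<in>{-1,1}. \<exists>i1\<in>{0,1,2}. \<exists>i2\<in>{0,1,2}. \<exists>i3\<in>{0,1,2::nat}.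
      \<forall>p. H p = phi s1 s2 (valc i1 p) (valc i2 p) (valc i3 p))"
proof -
  note CL = cell_label[OF H sel hs2_convex]
  have L0: "\<exists>l\<in>{0,1,2::nat}. \<forall>p. cellp 0 p \<longrightarrow> H p = valc l p"
    by (rule CL[of 1 0 0 0 "-1" 0 _ "(-1,1)"]) (auto simp: cellp_def)
  have L1: "\<exists>l\<in>{0,1,2::nat}. \<forall>p. cellp 1 p \<longrightarrow> H p = valc l p"
    by (rule CL[of "-1" 0 0 1 "-1" 0 _ "(1,2)"]) (auto simp: cellp_def)
  have L2: "\<exists>l\<in>{0,1,2::nat}. \<forall>p. cellp 2 p \<longrightarrow> H p = valc l p"
    by (rule CL[of 0 "-1" 0 "-1" 1 0 _ "(2,1)"]) (auto simp: cellp_def)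
  have L3: "\<exists>l\<in>{0,1,2::nat}. \<forall>p. cellp 3 p \<longrightarrow> H p = valc l p"
    by (rule CL[of 0 1 0 "-1" 0 0 _ "(1,-1)"]) (auto simp: cellp_def)
  have L4: "\<exists>l\<in>{0,1,2::nat}. \<forall>p. cellp 4 p \<longrightarrow> H p = valc l p"
    by (rule CL[of "-1" 1 0 1 0 0 _ "(-1,-2)"]) (auto simp: cellp_def)
  have L5: "\<exists>l\<in>{0,1,2::nat}. \<forall>p. cellp 5 p \<longrightarrow> H p = valc l p"
    by (rule CL[of 1 "-1" 0 0 1 0 _ "(-2,-1)"]) (auto simp: cellp_def)
  have "\<forall>k<6. \<exists>l\<in>{0,1,2::nat}. \<forall>p. cellp k p \<longrightarrow> H p = valc l p"
  proof (intro allI impI)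
    fix k :: nat assume "k < 6"
    then have "k = 0 \<or> k = 1 \<or> k = 2 \<or> k = 3 \<or> k = 4 \<or> k = 5" by auto
    then show "\<exists>l\<in>{0,1,2::nat}. \<forall>p. cellp k p \<longrightarrow> H p = valc l p"
      using L0 L1 L2 L3 L4 L5 by (elim disjE) simp_all
  qed
  then obtain l where "\<forall>k<6. l k \<in> {0,1,2} \<and> (\<forall>p. cellp k p \<longrightarrow> H p = valc (l k) p)"
    by metis
  then show ?thesis using comb[of l H] by blast
qed


definition lin2 :: "real \<Rightarrow> real \<Rightarrow> pt \<Rightarrow> pt \<Rightarrow> real" where
  "lin2 a b v x = a * (fst x - fst v) + b * (snd x - snd v)"

lemma lin2_cont: "continuous_on UNIV (lin2 a b v)"
  unfolding lin2_def by (intro continuous_intros)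

lemma lin2_add: "lin2 a b v (x + t *\<^sub>R d) = lin2 a b v x + t * (a * fst d + b * snd d)"
  unfolding lin2_def by (simp add: algebra_simps)

lemma hs_convex1: "convex {p::pt. a * fst p + b * snd p < c}"
proof -
  have e: "{p::pt. a * fst p + b * snd p < c} = {p. inner (a,b) p < c}"
    by (auto simp: inner_prod_def)
  show ?thesis unfolding e by (rule convex_halfspace_lt)
qed

lemma lin2_pos_convex: "convex {x. lin2 a b v x > 0}"
proof -
  have "{x. lin2 a b v x > 0} = {p::pt. (-a) * fst p + (-b) * snd p < - (a * fst v + b * snd v)}"
    by (auto simp: lin2_def algebra_simps)
  then show ?thesis using hs_convex1 by metis
qed

lemma lin2_neg_convex: "convex {x. lin2 a b v x < 0}"
proof -
  have "{x. lin2 a b v x < 0} = {p::pt. a * fst p + b * snd p < (a * fst v + b * snd v)}"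
    by (auto simp: lin2_def algebra_simps)
  then show ?thesis using hs_convex1 by metis
qed

lemma ratio_const:
  fixes G z :: "pt \<Rightarrow> real"
  assumes G: "continuous_on UNIV G" and z: "continuous_on UNIV z"
  and S: "convex S" and zS: "\<forall>x\<in>S. z x \<noteq> 0"
  and sel: "\<forall>x\<in>S. G x = \<alpha> * z x \<or> G x = 0 \<or> G x = \<gamma> * z x"
  shows "\<exists>\<mu>\<in>{\<alpha>, 0, \<gamma>}. \<forall>x\<in>S. G x = \<mu> * z x"
proof (cases "S = {}")
  case True then show ?thesis by auto
next
  case False
  have c: "continuous_on S (\<lambda>x. G x / z x)"
    using zS by (intro continuous_intros continuous_on_subset[OF G] continuous_on_subset[OF z]) auto
  have "(\<lambda>x. G x / z x) ` S \<subseteq> {\<alpha>, 0, \<gamma>}" using sel zS by auto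
  then have f: "finite ((\<lambda>x. G x / z x) ` S)" using finite_subset by blast
  obtain y where y: "\<forall>x\<in>S. G x / z x = y"
    using continuous_finite_range_constant[OF convex_connected[OF S] c f] unfolding constant_on_def by blast
  from False obtain x0 where "x0 \<in> S" by blast
  then have "y \<in> {\<alpha>, 0, \<gamma>}" using y sel zS by force
  moreover have "\<forall>x\<in>S. G x = y * z x" using y zS by (auto simp: field_simps)
  ultimately show ?thesis by blast
qed

lemma one_in_pm: "(1::real) \<in> {-1,1}" "(-1::real) \<in> {-1,1}" by simp_all

lemma degenerate:
  fixes G :: "pt \<Rightarrow> real"
  assumes G: "continuous_on UNIV G" and det: "A * D = B * C"
  and sel: "\<forall>x. G x = lin2 A B v x \<or> G x = 0 \<or> G x = lin2 C D v x"
  shows "\<exists>s1\<in>{-1,1}. \<exists>s2\<in>{-1,1}. \<exists>i1\<in>{0,1,2}. \<exists>i2\<in>{0,1,2}. \<exists>i3\<in>{0,1,2::nat}.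
      \<forall>x. G x = phi s1 s2 (valc i1 (lin2 A B v x, lin2 C D v x)) (valc i2 (lin2 A B v x, lin2 C D v x))
                        (valc i3 (lin2 A B v x, lin2 C D v x))"
proof -
  define u where "u = lin2 A B v"
  define w where "w = lin2 C D v"
  obtain a b \<alpha> \<gamma> where ab: "\<forall>x. u x = \<alpha> * lin2 a b v x" "\<forall>x. w x = \<gamma> * lin2 a b v x"
  proof (cases "A = 0 \<and> B = 0")
    case True
    then show ?thesis using that[of 0 C D 1] by (auto simp: u_def w_def lin2_def)
  next
    case False
    define c where "c = (if A \<noteq> 0 then C / A else D / B)"
    have "C = c * A \<and> D = c * B"
    proof (cases "A = 0")
      case True
      then have "B \<noteq> 0" using False by auto
      then show ?thesis using True det by (auto simp: c_def field_simps)
    next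
      case f: False
      then show ?thesis using det by (auto simp: c_def field_simps)
    qed
    then show ?thesis using that[of 1 A B c] by (auto simp: u_def w_def lin2_def algebra_simps)
  qed
  define z where "z = lin2 a b v"
  have zc: "continuous_on UNIV z" unfolding z_def by (rule lin2_cont)
  have selz: "\<forall>x. G x = \<alpha> * z x \<or> G x = 0 \<or> G x = \<gamma> * z x"
    using sel ab unfolding u_def w_def z_def by metis
  obtain \<mu>p where mp: "\<mu>p \<in> {\<alpha>, 0, \<gamma>}" "\<forall>x\<in>{x. z x > 0}. G x = \<mu>p * z x"
    using ratio_const[OF G zc _ _] selz lin2_pos_convex unfolding z_def by (metis less_irrefl mem_Collect_eq)
  obtain \<mu>n where mn: "\<mu>n \<in> {\<alpha>, 0, \<gamma>}" "\<forall>x\<in>{x. z x < 0}. G x = \<mu>n * z x"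
    using ratio_const[OF G zc _ _] selz lin2_neg_convex unfolding z_def by (metis less_irrefl mem_Collect_eq)
  have z0: "G x = 0" if "z x = 0" for x using selz[rule_format, of x] that by auto
  have idx: "\<exists>i\<in>{0,1,2::nat}. \<forall>x. valc i (u x, w x) = \<mu> * z x" if "\<mu> \<in> {\<alpha>, 0, \<gamma>}" for \<mu>
  proof -
    have "\<mu> = \<alpha> \<or> \<mu> = 0 \<or> \<mu> = \<gamma>" using that by auto
    then show ?thesis
    proof (elim disjE)
      assume "\<mu> = \<alpha>" then show ?thesis using ab by (intro bexI[of _ 0]) (auto simp: valc_def z_def)
    next
      assume "\<mu> = 0" then show ?thesis by (intro bexI[of _ 1]) (auto simp: valc_def)
    next
      assume "\<mu> = \<gamma>" then show ?thesis using ab by (intro bexI[of _ 2]) (auto simp: valc_def z_def)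
    qed
  qed
  obtain ip where ip: "ip \<in> {0,1,2}" "\<forall>x. valc ip (u x, w x) = \<mu>p * z x" using idx[OF mp(1)] by blast
  obtain iN where iN: "iN \<in> {0,1,2}" "\<forall>x. valc iN (u x, w x) = \<mu>n * z x" using idx[OF mn(1)] by blast
  show ?thesis
  proof (cases "\<mu>n \<le> \<mu>p")
    case True
    have "\<forall>x. G x = phi 1 1 (valc ip (u x, w x)) (valc iN (u x, w x)) (valc iN (u x, w x))"
    proof
      fix x
      consider "z x > 0" | "z x < 0" | "z x = 0" by linarith
      then show "G x = phi 1 1 (valc ip (u x, w x)) (valc iN (u x, w x)) (valc iN (u x, w x))"
      proof cases
        case 1
        then have "\<mu>n * z x \<le> \<mu>p * z x" using True by (simp add: mult_right_mono)
        moreover have "G x = \<mu>p * z x" using mp(2) 1 by blast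
        ultimately show ?thesis using ip(2)[rule_format, of x] iN(2)[rule_format, of x] by (simp add: phi_def max_def)
      next
        case 2
        then have "\<mu>p * z x \<le> \<mu>n * z x" using True by (simp add: mult_right_mono_neg)
        moreover have "G x = \<mu>n * z x" using mn(2) 2 by blast
        ultimately show ?thesis using ip(2)[rule_format, of x] iN(2)[rule_format, of x] by (simp add: phi_def max_def)
      next
        case 3
        then show ?thesis using z0[of x] ip(2)[rule_format, of x] iN(2)[rule_format, of x] by (simp add: phi_def)
      qed
    qed
    then show ?thesis using ip(1) iN(1) unfolding u_def w_def
      using one_in_pm by blast
  next
    case False
    have "\<forall>x. G x = phi (-1) 1 (valc ip (u x, w x)) (valc iN (u x, w x)) (valc iN (u x, w x))"
    proof
      fix x
      consider "z x > 0" | "z x < 0" | "z x = 0" by linarith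
      then show "G x = phi (-1) 1 (valc ip (u x, w x)) (valc iN (u x, w x)) (valc iN (u x, w x))"
      proof cases
        case 1
        then have "\<mu>p * z x \<le> \<mu>n * z x" using False by (simp add: mult_right_mono)
        moreover have "G x = \<mu>p * z x" using mp(2) 1 by blast
        ultimately show ?thesis using ip(2)[rule_format, of x] iN(2)[rule_format, of x] by (simp add: phi_def max_def)
      next
        case 2
        then have "\<mu>n * z x \<le> \<mu>p * z x" using False by (simp add: mult_right_mono_neg)
        moreover have "G x = \<mu>n * z x" using mn(2) 2 by blast
        ultimately show ?thesis using ip(2)[rule_format, of x] iN(2)[rule_format, of x] by (simp add: phi_def max_def)
      next
        case 3
        then show ?thesis using z0[of x] ip(2)[rule_format, of x] iN(2)[rule_format, of x] by (simp add: phi_def)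
      qed
    qed
    then show ?thesis using ip(1) iN(1) unfolding u_def w_def
      using one_in_pm by blast
  qed
qed


definition dvec :: "real \<Rightarrow> real \<Rightarrow> real \<Rightarrow> real \<Rightarrow> real \<Rightarrow> real \<Rightarrow> pt" where
  "dvec A B C D p q = ((D*p - B*q)/(A*D - B*C), (A*q - C*p)/(A*D - B*C))"

lemma dvec1: "A*D - B*C \<noteq> 0 \<Longrightarrow> A * fst (dvec A B C D p q) + B * snd (dvec A B C D p q) = p"
  by (simp add: dvec_def divide_simps) (simp add: algebra_simps)

lemma dvec2: "A*D - B*C \<noteq> 0 \<Longrightarrow> C * fst (dvec A B C D p q) + D * snd (dvec A B C D p q) = q"
  by (simp add: dvec_def divide_simps) (simp add: algebra_simps)

lemma lin2_v: "lin2 a b v (v + d) = a * fst d + b * snd d"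
  by (simp add: lin2_def)

lemma dvec_inv: "A*D - B*C \<noteq> 0 \<Longrightarrow> v + dvec A B C D (lin2 A B v x) (lin2 C D v x) = x"
proof -
  assume d: "A*D - B*C \<noteq> 0"
  have "fst (dvec A B C D (lin2 A B v x) (lin2 C D v x)) = fst x - fst v"
    using d by (simp add: dvec_def lin2_def divide_simps) (simp add: algebra_simps)
  moreover have "snd (dvec A B C D (lin2 A B v x) (lin2 C D v x)) = snd x - snd v"
    using d by (simp add: dvec_def lin2_def divide_simps) (simp add: algebra_simps)
  ultimately show ?thesis by (simp add: prod_eq_iff)
qed

lemma med_contra:
  fixes F k1 k2 k3 :: "pt \<Rightarrow> real"
  assumes det: "A*D - B*C \<noteq> 0"
  and med: "\<forall>x. F x - k2 x = med3 (lin2 A B v x) 0 (lin2 C D v x)"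
  and k1: "\<forall>x. k1 x = k2 x + lin2 A B v x" and k3: "\<forall>x. k3 x = k2 x + lin2 C D v x"
  and cov: "\<forall>x. x \<in> P1 \<or> x \<in> P2 \<or> x \<in> P3"
  and on1: "\<forall>x\<in>P1. F x = k1 x" and on2: "\<forall>x\<in>P2. F x = k2 x" and on3: "\<forall>x\<in>P3. F x = k3 x"
  and conn: "connected (interior P2)"
  shows False
proof -
  define u where "u = lin2 A B v"
  define w where "w = lin2 C D v"
  have uc: "continuous_on UNIV u" and wc: "continuous_on UNIV w" unfolding u_def w_def by (rule lin2_cont)+
  have inP2: "x \<in> P2" if "u x \<noteq> 0" "w x \<noteq> 0" "med3 (u x) 0 (w x) = 0" for x
  proof -
    have "F x - k2 x = 0" using med[rule_format, of x] that unfolding u_def w_def by simp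
    show ?thesis
    proof (rule ccontr)
      assume "x \<notin> P2"
      then have "x \<in> P1 \<or> x \<in> P3" using cov by blast
      then show False
      proof
        assume "x \<in> P1"
        then have "F x = k2 x + u x" using on1 k1 unfolding u_def by simp
        then show False using \<open>F x - k2 x = 0\<close> that(1) by simp
      next
        assume "x \<in> P3"
        then have "F x = k2 x + w x" using on3 k3 unfolding w_def by simp
        then show False using \<open>F x - k2 x = 0\<close> that(2) by simp
      qed
    qed
  qed
  define c0 where "c0 = {x. u x < 0} \<inter> {x. 0 < w x}"
  define c3 where "c3 = {x. w x < 0} \<inter> {x. 0 < u x}"
  have oc0: "open c0" unfolding c0_def
    by (intro open_Int open_Collect_less uc wc continuous_on_const)
  have oc3: "open c3" unfolding c3_def
    by (intro open_Int open_Collect_less uc wc continuous_on_const)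
  have "c0 \<subseteq> P2" unfolding c0_def by (auto intro!: inP2 simp: med3_def max_def min_def)
  then have i0: "c0 \<subseteq> interior P2" using oc0 interior_maximal by blast
  have "c3 \<subseteq> P2" unfolding c3_def by (auto intro!: inP2 simp: med3_def max_def min_def)
  then have i3: "c3 \<subseteq> interior P2" using oc3 interior_maximal by blast
  have ud: "u (v + dvec A B C D p q) = p" for p q unfolding u_def lin2_v using dvec1[OF det] .
  have wd: "w (v + dvec A B C D p q) = q" for p q unfolding w_def lin2_v using dvec2[OF det] .
  have "v + dvec A B C D (-1) 1 \<in> c0" unfolding c0_def using ud wd by simp
  then have m1: "-1 \<in> u ` interior P2" using i0 ud by (metis image_eqI subsetD)
  have "v + dvec A B C D 1 (-1) \<in> c3" unfolding c3_def using ud wd by simp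
  then have p1: "1 \<in> u ` interior P2" using i3 ud by (metis image_eqI subsetD)
  have "connected (u ` interior P2)"
    by (rule connected_continuous_image[OF continuous_on_subset[OF uc] conn]) simp
  then have "{-1..1} \<subseteq> u ` interior P2" using connected_contains_Icc m1 p1 by blast
  then have "0 \<in> u ` interior P2" by auto
  then obtain x where x: "x \<in> interior P2" "u x = 0" by (metis imageE)
  obtain e where e: "e > 0" "ball x e \<subseteq> interior P2"
    using x(1) open_contains_ball[of "interior P2"] by blast
  define p :: real where "p = (if w x \<ge> 0 then 1 else -1)"
  define q :: real where "q = (if w x \<ge> 0 then 2 else -2)"
  define d where "d = dvec A B C D p q"
  define t where "t = e / (2 * (norm d + 1))"
  have tpos: "t > 0" unfolding t_def using e(1) by (intro divide_pos_pos) (auto intro: add_nonneg_pos)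
  have "t * norm d < e"
  proof -
    have "t * norm d = e * (norm d / (2 * (norm d + 1)))" unfolding t_def by (simp add: field_simps)
    also have "\<dots> < e * 1"
    proof (intro mult_strict_left_mono)
      have "0 \<le> norm d" by simp
      have a: "norm d < 2 * (norm d + 1)" using norm_ge_zero[of d] by (smt (verit))
      have b: "0 < 2 * (norm d + 1)" using norm_ge_zero[of d] by (smt (verit))
      from a b show "norm d / (2 * (norm d + 1)) < 1" using divide_less_eq_1_pos by blast
    qed (use e(1) in auto)
    finally show ?thesis by simp
  qed
  define y where "y = x + t *\<^sub>R d"
  have "dist x y < e" unfolding y_def dist_norm using tpos \<open>t * norm d < e\<close> by simp
  then have "y \<in> ball x e" by simp
  then have "y \<in> P2" using e(2) interior_subset by blast
  then have "med3 (u y) 0 (w y) = 0" using med[rule_format, of y] on2 unfolding u_def w_def by simp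
  moreover have "u y = t * p" unfolding y_def u_def lin2_add using x(2) dvec1[OF det] unfolding d_def u_def by simp
  moreover have "w y = w x + t * q" unfolding y_def w_def lin2_add using dvec2[OF det] unfolding d_def by simp
  ultimately have M: "med3 (t * p) 0 (w x + t * q) = 0" by simp
  show False
  proof (cases "w x \<ge> 0")
    case True
    then have "p = 1" "q = 2" unfolding p_def q_def by auto
    then have "med3 (t * p) 0 (w x + t * q) = t" using True tpos by (simp add: med3_def)
    then show False using M tpos by simp
  next
    case False
    then have "p = -1" "q = -2" unfolding p_def q_def by auto
    then have "med3 (t * p) 0 (w x + t * q) = -t" using False tpos by (simp add: med3_def)
    then show False using M tpos by simp
  qed
qed

lemma nondeg:
  fixes G :: "pt \<Rightarrow> real"
  assumes G: "continuous_on UNIV G" and det: "A*D - B*C \<noteq> 0"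
  and sel: "\<forall>x. G x = lin2 A B v x \<or> G x = 0 \<or> G x = lin2 C D v x"
  shows "(\<forall>x. G x = med3 (lin2 A B v x) 0 (lin2 C D v x)) \<or>
    (\<exists>s1\<in>{-1,1}. \<exists>s2\<in>{-1,1}. \<exists>i1\<in>{0,1,2}. \<exists>i2\<in>{0,1,2}. \<exists>i3\<in>{0,1,2::nat}.
      \<forall>x. G x = phi s1 s2 (valc i1 (lin2 A B v x, lin2 C D v x)) (valc i2 (lin2 A B v x, lin2 C D v x))
                        (valc i3 (lin2 A B v x, lin2 C D v x)))"
proof -
  define T where "T p = v + dvec A B C D (fst p) (snd p)" for p
  define H where "H p = G (T p)" for p
  have Tc: "continuous_on UNIV T" unfolding T_def dvec_def using det by (intro continuous_intros) auto
  have Hc: "continuous_on UNIV H" unfolding H_def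
    using continuous_on_compose[OF Tc continuous_on_subset[OF G]] by (simp add: o_def)
  have uT: "lin2 A B v (T p) = fst p" and wT: "lin2 C D v (T p) = snd p" for p
    unfolding T_def lin2_v using dvec1[OF det] dvec2[OF det] by auto
  have Hsel: "\<forall>p. H p = fst p \<or> H p = 0 \<or> H p = snd p"
    unfolding H_def using sel uT wT by metis
  have bk: "G x = H (lin2 A B v x, lin2 C D v x)" for x
    unfolding H_def T_def using dvec_inv[OF det] by simp
  from canonical[OF Hc Hsel] show ?thesis
  proof
    assume "\<forall>p. H p = med3 (fst p) 0 (snd p)"
    then show ?thesis using bk by simp
  next
    assume "\<exists>s1\<in>{-1,1}. \<exists>s2\<in>{-1,1}. \<exists>i1\<in>{0,1,2}. \<exists>i2\<in>{0,1,2}. \<exists>i3\<in>{0,1,2::nat}.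
      \<forall>p. H p = phi s1 s2 (valc i1 p) (valc i2 p) (valc i3 p)"
    then obtain s1 s2 i1 i2 i3 where "s1\<in>{-1,1}" "s2\<in>{-1,1}" "i1\<in>{0,1,2}" "i2\<in>{0,1,2}" "i3\<in>{0,1,2::nat}"
      and hh: "\<forall>p. H p = phi s1 s2 (valc i1 p) (valc i2 p) (valc i3 p)" by blast
    moreover have "\<forall>x. G x = phi s1 s2 (valc i1 (lin2 A B v x, lin2 C D v x)) (valc i2 (lin2 A B v x, lin2 C D v x))
                        (valc i3 (lin2 A B v x, lin2 C D v x))" using bk hh by simp
    ultimately show ?thesis by (intro disjI2) blast
  qed
qed

definition sel3 :: "(pt \<Rightarrow> real) \<Rightarrow> (pt \<Rightarrow> real) \<Rightarrow> (pt \<Rightarrow> real) \<Rightarrow> nat \<Rightarrow> pt \<Rightarrow> real" where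
  "sel3 k1 k2 k3 i x = (if i = 0 then k1 x else if i = 1 then k2 x else k3 x)"

lemma phi_shift:
  assumes "s1 \<in> {-1,1}" "s2 \<in> {-1,1}"
  shows "phi s1 s2 (y1 + c) (y2 + c) (y3 + c) = phi s1 s2 y1 y2 y3 + c"
  using assms by (auto simp: phi_def max_def algebra_simps)

lemma abstract_main:
  fixes F k1 k2 k3 :: "pt \<Rightarrow> real" and v :: pt and P1 P2 P3 :: "pt set"
  assumes F: "continuous_on UNIV F"
  and k1: "\<forall>x. k1 x = a1 * fst x + b1 * snd x + c1"
  and k2: "\<forall>x. k2 x = a2 * fst x + b2 * snd x + c2"
  and k3: "\<forall>x. k3 x = a3 * fst x + b3 * snd x + c3"
  and kv: "k1 v = F v" "k2 v = F v" "k3 v = F v"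
  and cov: "\<forall>x. x \<in> P1 \<or> x \<in> P2 \<or> x \<in> P3"
  and on1: "\<forall>x\<in>P1. F x = k1 x" and on2: "\<forall>x\<in>P2. F x = k2 x" and on3: "\<forall>x\<in>P3. F x = k3 x"
  and conn: "connected (interior P2)"
  shows "\<exists>s1\<in>{-1,1}. \<exists>s2\<in>{-1,1}. \<exists>i1\<in>{0,1,2}. \<exists>i2\<in>{0,1,2}. \<exists>i3\<in>{0,1,2::nat}.
      \<forall>x. F x = phi s1 s2 (sel3 k1 k2 k3 i1 x) (sel3 k1 k2 k3 i2 x) (sel3 k1 k2 k3 i3 x)"
proof -
  define A where "A = a1 - a2"
  define B where "B = b1 - b2"
  define C where "C = a3 - a2"
  define D where "D = b3 - b2"
  have e1: "\<forall>x. k1 x = k2 x + lin2 A B v x"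
  proof
    fix x
    have "c1 - c2 = - ((a1 - a2) * fst v + (b1 - b2) * snd v)" using kv k1[rule_format, of v] k2[rule_format, of v] by (simp add: algebra_simps)
    then show "k1 x = k2 x + lin2 A B v x" using k1[rule_format, of x] k2[rule_format, of x] by (simp add: A_def B_def lin2_def algebra_simps)
  qed
  have e3: "\<forall>x. k3 x = k2 x + lin2 C D v x"
  proof
    fix x
    have "c3 - c2 = - ((a3 - a2) * fst v + (b3 - b2) * snd v)" using kv k3[rule_format, of v] k2[rule_format, of v] by (simp add: algebra_simps)
    then show "k3 x = k2 x + lin2 C D v x" using k3[rule_format, of x] k2[rule_format, of x] by (simp add: C_def D_def lin2_def algebra_simps)
  qed
  define G where "G x = F x - k2 x" for x
  have k2c: "continuous_on UNIV k2"
  proof -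
    have "k2 = (\<lambda>x. a2 * fst x + b2 * snd x + c2)" using k2 by auto
    then show ?thesis by (auto intro!: continuous_intros)
  qed
  have Gc: "continuous_on UNIV G" unfolding G_def by (intro continuous_intros F k2c)
  have Gsel: "\<forall>x. G x = lin2 A B v x \<or> G x = 0 \<or> G x = lin2 C D v x"
  proof
    fix x
    have "x \<in> P1 \<or> x \<in> P2 \<or> x \<in> P3" using cov by blast
    then show "G x = lin2 A B v x \<or> G x = 0 \<or> G x = lin2 C D v x"
    proof (elim disjE)
      assume "x \<in> P1" then show ?thesis using on1 e1[rule_format, of x] unfolding G_def by simp
    next
      assume "x \<in> P2" then show ?thesis using on2 unfolding G_def by simp
    next
      assume "x \<in> P3" then show ?thesis using on3 e3[rule_format, of x] unfolding G_def by simp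
    qed
  qed
  have conv: "\<forall>x. F x = phi s1 s2 (sel3 k1 k2 k3 i1 x) (sel3 k1 k2 k3 i2 x) (sel3 k1 k2 k3 i3 x)"
    if s: "s1 \<in> {-1,1}" "s2 \<in> {-1,1}"
    and h: "\<forall>x. G x = phi s1 s2 (valc i1 (lin2 A B v x, lin2 C D v x)) (valc i2 (lin2 A B v x, lin2 C D v x))
                        (valc i3 (lin2 A B v x, lin2 C D v x))" for s1 s2 i1 i2 i3
  proof
    fix x
    have sv: "sel3 k1 k2 k3 i x = valc i (lin2 A B v x, lin2 C D v x) + k2 x" for i
      using e1[rule_format, of x] e3[rule_format, of x] by (simp add: sel3_def valc_def)
    have "F x = G x + k2 x" unfolding G_def by simp
    also have "\<dots> = phi s1 s2 (sel3 k1 k2 k3 i1 x) (sel3 k1 k2 k3 i2 x) (sel3 k1 k2 k3 i3 x)"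
      unfolding sv phi_shift[OF s] using h[rule_format, of x] by simp
    finally show "F x = phi s1 s2 (sel3 k1 k2 k3 i1 x) (sel3 k1 k2 k3 i2 x) (sel3 k1 k2 k3 i3 x)" .
  qed
  have "\<exists>s1\<in>{-1,1}. \<exists>s2\<in>{-1,1}. \<exists>i1\<in>{0,1,2}. \<exists>i2\<in>{0,1,2}. \<exists>i3\<in>{0,1,2::nat}.
      \<forall>x. G x = phi s1 s2 (valc i1 (lin2 A B v x, lin2 C D v x)) (valc i2 (lin2 A B v x, lin2 C D v x))
                        (valc i3 (lin2 A B v x, lin2 C D v x))"
  proof (cases "A*D - B*C = 0")
    case True
    then show ?thesis using degenerate[OF Gc _ Gsel] by simp
  next
    case False
    from nondeg[OF Gc False Gsel] show ?thesis
    proof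
      assume "\<forall>x. G x = med3 (lin2 A B v x) 0 (lin2 C D v x)"
      then have False using med_contra[OF False _ e1 e3 cov on1 on2 on3 conn] unfolding G_def by blast
      then show ?thesis ..
    qed
  qed
  then obtain s1 s2 i1 i2 i3 where "s1\<in>{-1,1}" "s2\<in>{-1,1}" "i1\<in>{0,1,2}" "i2\<in>{0,1,2}" "i3\<in>{0,1,2::nat}"
      and hh: "\<forall>x. G x = phi s1 s2 (valc i1 (lin2 A B v x, lin2 C D v x)) (valc i2 (lin2 A B v x, lin2 C D v x))
                        (valc i3 (lin2 A B v x, lin2 C D v x))" by blast
  moreover have "\<forall>x. F x = phi s1 s2 (sel3 k1 k2 k3 i1 x) (sel3 k1 k2 k3 i2 x) (sel3 k1 k2 k3 i3 x)"
    by (rule conv[OF calculation(1,2) hh])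
  ultimately show ?thesis by blast
qed


lemma ray_endpoint_vertex:
  fixes Fr Vs :: "pt set"
  assumes clF: "closed Fr"
  and Vs: "Vs = {x. vertex_of Fr x}"
  and VsV: "Vs \<subseteq> {v}"
  and yS: "y \<in> Fr - Vs"
  and ray: "closure (connected_component_set (Fr - Vs) y) = ray2 a d" and d0: "d \<noteq> 0"
  shows "a \<in> Vs"
proof (rule ccontr)
  assume aV: "a \<notin> Vs"
  define S where "S = Fr - Vs"
  define C where "C = connected_component_set S y"
  have CS: "C \<subseteq> S" unfolding C_def by (rule connected_component_subset)
  have aray: "a \<in> ray2 a d" unfolding ray2_def by force
  then have aclC: "a \<in> closure C" using ray unfolding C_def S_def by simp
  have clCF: "closure C \<subseteq> Fr" using CS clF unfolding S_def by (intro closure_minimal) auto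
  then have aF: "a \<in> Fr" using aclC by blast
  then have aS: "a \<in> S" using aV unfolding S_def by blast
  have "closedin (top_of_set S) C" unfolding C_def by (rule closedin_connected_component)
  then obtain T where T: "closed T" "C = S \<inter> T" unfolding closedin_closed by blast
  have "closure C \<subseteq> T" using T by (intro closure_minimal) auto
  then have aC: "a \<in> C" using aclC aS T(2) by blast
  have "\<not> vertex_of Fr a" using aV Vs by blast
  then obtain e b u where e: "e > 0" "u \<noteq> 0" and line: "Fr \<inter> ball a e = line2 b u \<inter> ball a e"
    using aF unfolding vertex_of_def by blast
  define s0 where "s0 = e / (2 * (norm d + 1))"
  have nd: "0 \<le> norm d" by simp
  have s0pos: "s0 > 0" unfolding s0_def using e(1) nd using e(1) nd by (intro divide_pos_pos; smt (verit))
  have s0d: "s0 * norm d < e"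
  proof -
    have "s0 * norm d = e * (norm d / (2 * (norm d + 1)))" unfolding s0_def by (simp add: field_simps)
    also have "\<dots> < e * 1"
    proof (intro mult_strict_left_mono)
      have a: "norm d < 2 * (norm d + 1)" using nd by (smt (verit))
      have b: "0 < 2 * (norm d + 1)" using nd by (smt (verit))
      from a b show "norm d / (2 * (norm d + 1)) < 1" using divide_less_eq_1_pos by blast
    qed (use e(1) in auto)
    finally show ?thesis by simp
  qed
  have "a + s0 *\<^sub>R d \<in> ray2 a d" unfolding ray2_def using s0pos by force
  then have "a + s0 *\<^sub>R d \<in> Fr" using ray clCF unfolding C_def S_def by blast
  moreover have "a + s0 *\<^sub>R d \<in> ball a e" using s0d s0pos by (simp add: dist_norm)
  ultimately have "a + s0 *\<^sub>R d \<in> line2 b u" using line by blast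
  then obtain r2 where r2: "a + s0 *\<^sub>R d = b + r2 *\<^sub>R u" unfolding line2_def by blast
  have "a \<in> Fr \<inter> ball a e" using aF e(1) by simp
  then have "a \<in> line2 b u \<inter> ball a e" by (simp only: line)
  then have "a \<in> line2 b u" by blast
  then obtain r1 where r1: "a = b + r1 *\<^sub>R u" unfolding line2_def by blast
  have "s0 *\<^sub>R d = (a + s0 *\<^sub>R d) - a" by simp
  also have "\<dots> = (b + r2 *\<^sub>R u) - (b + r1 *\<^sub>R u)" by (simp only: r2[symmetric] r1[symmetric])
  also have "\<dots> = (r2 - r1) *\<^sub>R u" by (simp add: algebra_simps)
  finally have sd: "s0 *\<^sub>R d = (r2 - r1) *\<^sub>R u" .
  define \<tau>1 where "\<tau>1 = (if a = v then s0 else min s0 (dist a v / (norm d + 1)))"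
  have t1pos: "\<tau>1 > 0"
  proof (cases "a = v")
    case True then show ?thesis unfolding \<tau>1_def using s0pos by simp
  next
    case False
    then have "dist a v > 0" by simp
    moreover have "norm d + 1 > 0" using nd by linarith
    ultimately have "dist a v / (norm d + 1) > 0" by (rule divide_pos_pos)
    then show ?thesis unfolding \<tau>1_def using s0pos False by simp
  qed
  have t1s0: "\<tau>1 \<le> s0" unfolding \<tau>1_def by auto
  have notv: "a - \<tau> *\<^sub>R d \<noteq> v" if "0 < \<tau>" "\<tau> \<le> \<tau>1" for \<tau>
  proof (cases "a = v")
    case True
    then show ?thesis using that d0 by simp
  next
    case False
    then have "\<tau> \<le> dist a v / (norm d + 1)" using that unfolding \<tau>1_def by auto
    then have "\<tau> * (norm d + 1) \<le> dist a v" using nd by (simp add: field_simps)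
    moreover have "\<tau> * (norm d + 1) = \<tau> * norm d + \<tau>" by (simp add: algebra_simps)
    ultimately have "\<tau> * norm d < dist a v" using that(1) by linarith
    moreover have "dist a (a - \<tau> *\<^sub>R d) = \<tau> * norm d" using that(1) by (simp add: dist_norm)
    ultimately show ?thesis by auto
  qed
  define seg where "seg = (\<lambda>\<tau>. a - \<tau> *\<^sub>R d) ` {0..\<tau>1}"
  have segc: "connected seg" unfolding seg_def
    by (intro connected_continuous_image continuous_intros) simp
  have aseg: "a \<in> seg" unfolding seg_def using t1pos by force
  have segS: "seg \<subseteq> S"
  proof
    fix z assume "z \<in> seg"
    then obtain \<tau> where t: "0 \<le> \<tau>" "\<tau> \<le> \<tau>1" and z: "z = a - \<tau> *\<^sub>R d" unfolding seg_def by auto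
    have "\<tau> *\<^sub>R d = (\<tau> / s0) *\<^sub>R (s0 *\<^sub>R d)" using s0pos by simp
    also have "\<dots> = (\<tau> / s0 * (r2 - r1)) *\<^sub>R u" unfolding sd by simp
    finally have "z = b + (r1 - \<tau> / s0 * (r2 - r1)) *\<^sub>R u" using z r1 by (simp add: algebra_simps)
    then have zl: "z \<in> line2 b u" unfolding line2_def by blast
    have "dist a z = \<tau> * norm d" using z t by (simp add: dist_norm)
    also have "\<dots> \<le> s0 * norm d" using t t1s0 nd by (intro mult_right_mono) auto
    finally have "z \<in> ball a e" using s0d by simp
    then have zF: "z \<in> Fr" using zl line by blast
    have "z \<notin> Vs"
    proof (cases "\<tau> = 0")
      case True then show ?thesis using z aV by simp
    next
      case False then show ?thesis using notv[of \<tau>] t z VsV by auto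
    qed
    then show "z \<in> S" using zF unfolding S_def by blast
  qed
  have "connected_component_set S a = C" unfolding C_def by (rule connected_component_eq) (use aC C_def in simp)
  then have "seg \<subseteq> C" using connected_component_maximal[OF aseg segc segS] by simp
  moreover have "a - \<tau>1 *\<^sub>R d \<in> seg" unfolding seg_def using t1pos by force
  ultimately have "a - \<tau>1 *\<^sub>R d \<in> ray2 a d" using ray closure_subset unfolding C_def S_def by blast
  then obtain t where t: "0 \<le> t" "a - \<tau>1 *\<^sub>R d = a + t *\<^sub>R d" unfolding ray2_def by blast
  then have "(t + \<tau>1) *\<^sub>R d = 0" by (simp add: algebra_simps)
  then show False using t(1) t1pos d0 by simp
qed

lemma adm_1:
  assumes "admissible f \<P>"
  shows "continuous_on UNIV f"
  using assms unfolding admissible_def by (elim conjE) assumption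

lemma adm_2:
  assumes "admissible f \<P>"
  shows "finite \<P>"
  using assms unfolding admissible_def by (elim conjE) assumption

lemma adm_3:
  assumes "admissible f \<P>"
  shows "\<forall>P\<in>\<P>. polygon P"
  using assms unfolding admissible_def by (elim conjE) assumption

lemma adm_4:
  assumes "admissible f \<P>"
  shows "\<Union>\<P> = UNIV"
  using assms unfolding admissible_def by (elim conjE) assumption

lemma adm_5:
  assumes "admissible f \<P>"
  shows "\<forall>P\<in>\<P>. \<forall>Q\<in>\<P>. P \<noteq> Q \<longrightarrow> P \<inter> Q = frontier P \<inter> frontier Q"
  using assms unfolding admissible_def by (elim conjE) assumption

lemma adm_6:
  assumes "admissible f \<P>"
  shows "\<forall>P\<in>\<P>. \<exists>h. affine_fun h \<and> (\<forall>x\<in>P. f x = h x)"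
  using assms unfolding admissible_def by (elim conjE) assumption

lemma vf_1:
  assumes "v_function v f \<P>"
  shows "admissible f \<P>"
  using assms unfolding v_function_def by (elim conjE) assumption

lemma vf_2:
  assumes "v_function v f \<P>"
  shows "(\<Union>P\<in>\<P>. vertices P) = {v}"
  using assms unfolding v_function_def by (elim conjE) assumption

lemma vf_3:
  assumes "v_function v f \<P>"
  shows "\<forall>P\<in>\<P>. \<forall>E\<in>edges P. is_ray E"
  using assms unfolding v_function_def by (elim conjE) assumption

lemma poly_1:
  assumes "polygon P"
  shows "closed P"
  using assms unfolding polygon_def by (elim conjE) assumption

lemma poly_2:
  assumes "polygon P"
  shows "connected (interior P)"
  using assms unfolding polygon_def by (elim conjE) assumption

lemma piece_has_v:
  assumes vf: "v_function v f \<P>" and card: "card \<P> = 3" and P: "P \<in> \<P>" and ne: "P \<noteq> {}"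
  shows "v \<in> P"
proof -
  note adm = vf_1[OF vf] and VV = vf_2[OF vf] and rays = vf_3[OF vf]
  have polyP: "polygon P" using adm_3[OF adm] P by blast
  then have clP: "closed P" by (rule poly_1)
  have PU: "P \<noteq> UNIV"
  proof
    assume PU: "P = UNIV"
    obtain x y z where xyz: "\<P> = {x,y,z}" "x \<noteq> y" "y \<noteq> z" "x \<noteq> z" using card card_3_iff by metis
    have "P = x \<or> P = y \<or> P = z" using xyz(1) P by blast
    then have "\<exists>Q1 Q2. Q1 \<in> \<P> \<and> Q2 \<in> \<P> \<and> Q1 \<noteq> P \<and> Q2 \<noteq> P \<and> Q1 \<noteq> Q2"
    proof (elim disjE)
      assume "P = x" then show ?thesis using xyz by (intro exI[of _ y] exI[of _ z]) simp
    next
      assume "P = y" then show ?thesis using xyz by (intro exI[of _ x] exI[of _ z]) simp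
    next
      assume "P = z" then show ?thesis using xyz by (intro exI[of _ x] exI[of _ y]) simp
    qed
    then obtain Q1 Q2 where Q: "Q1 \<in> \<P>" "Q2 \<in> \<P>" "Q1 \<noteq> P" "Q2 \<noteq> P" "Q1 \<noteq> Q2" by blast
    note int = adm_5[OF adm]
    have "P \<inter> Q1 = frontier P \<inter> frontier Q1" using int P Q(1,3) by metis
    then have "Q1 = {}" using PU by simp
    moreover have "P \<inter> Q2 = frontier P \<inter> frontier Q2" using int P Q(2,4) by metis
    then have "Q2 = {}" using PU by simp
    ultimately show False using Q(5) by simp
  qed
  have "frontier P \<noteq> {}" using ne PU frontier_eq_empty by blast
  then obtain y where yF: "y \<in> frontier P" by blast
  have VP: "vertices P \<subseteq> {v}" using VV P by blast
  have FP: "frontier P \<subseteq> P" using clP by (rule frontier_subset_closed)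
  show ?thesis
  proof (cases "y \<in> vertices P")
    case True
    then show ?thesis using VP yF FP by blast
  next
    case False
    define C where "C = connected_component_set (frontier P - vertices P) y"
    have "C \<in> components (frontier P - vertices P)" unfolding C_def components_iff using yF False by blast
    then have "closure C \<in> edges P" unfolding edges_def by blast
    then have "is_ray (closure C)" using rays P by blast
    then obtain a d where d: "d \<noteq> 0" "closure C = ray2 a d" unfolding is_ray_def by blast
    have "a \<in> vertices P"
    proof (rule ray_endpoint_vertex[OF frontier_closed _ VP, where y=y and a=a and d=d])
      show "vertices P = {x. vertex_of (frontier P) x}" by (simp add: vertices_def)
      show "y \<in> frontier P - vertices P" using yF False by blast
      show "closure (connected_component_set (frontier P - vertices P) y) = ray2 a d" using d C_def by simp
      show "d \<noteq> 0" by (rule d(1))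
    qed
    then have "a = v" using VP by blast
    moreover have "a \<in> closure C" using d unfolding ray2_def by force
    moreover have "closure C \<subseteq> frontier P"
    proof (rule closure_minimal)
      show "C \<subseteq> frontier P" unfolding C_def using connected_component_subset by blast
    qed simp
    ultimately show ?thesis using FP by blast
  qed
qed


theorem lemma4p4:
  fixes v :: pt and f :: "pt \<Rightarrow> real" and \<P> :: "pt set set"
  assumes "f \<in> CPA3" and "v_function v f \<P>" and "card \<P> = 3"
  shows "\<exists>\<sigma>1 \<sigma>2 g1 g2 g3. \<sigma>1 \<in> {-1, 1} \<and> \<sigma>2 \<in> {-1, 1} \<and>
     (\<forall>g\<in>{g1, g2, g3}. \<exists>P\<in>\<P>. \<exists>h s. affine_component f P h \<and> s \<in> {-1, 1::real} \<and> g = (\<lambda>x. s * h x)) \<and>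
     (\<forall>x. f x = \<sigma>1 * max (g1 x) (\<sigma>2 * max (g2 x) (g3 x)))"
proof -
  note adm = vf_1[OF assms(2)]
  obtain P1 P2 P3 where Ps: "\<P> = {P1,P2,P3}" "P1 \<noteq> P2" "P2 \<noteq> P3" "P1 \<noteq> P3"
    using assms(3) card_3_iff by metis
  have aff: "\<forall>P\<in>\<P>. \<exists>h. affine_fun h \<and> (\<forall>x\<in>P. f x = h x)" by (rule adm_6[OF adm])
  obtain h1 where h1: "affine_fun h1" "\<forall>x\<in>P1. f x = h1 x" using aff Ps(1) by blast
  obtain h2 where h2: "affine_fun h2" "\<forall>x\<in>P2. f x = h2 x" using aff Ps(1) by blast
  obtain h3 where h3: "affine_fun h3" "\<forall>x\<in>P3. f x = h3 x" using aff Ps(1) by blast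
  have cov: "\<forall>x. x \<in> P1 \<or> x \<in> P2 \<or> x \<in> P3"
  proof
    fix x
    have "x \<in> \<Union>\<P>" using adm_4[OF adm] by simp
    then show "x \<in> P1 \<or> x \<in> P2 \<or> x \<in> P3" using Ps(1) by blast
  qed
  have P1in: "P1 \<in> \<P>" and P2in: "P2 \<in> \<P>" and P3in: "P3 \<in> \<P>" using Ps(1) by auto
  have hv1: "h1 v = f v" if "P1 \<noteq> {}"
    using piece_has_v[OF assms(2,3) P1in that] h1(2) by simp
  have hv2: "h2 v = f v" if "P2 \<noteq> {}"
    using piece_has_v[OF assms(2,3) P2in that] h2(2) by simp
  have hv3: "h3 v = f v" if "P3 \<noteq> {}"
    using piece_has_v[OF assms(2,3) P3in that] h3(2) by simp
  obtain h0 where h0: "affine_fun h0" "h0 v = f v"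
  proof -
    have "v \<in> P1 \<or> v \<in> P2 \<or> v \<in> P3" using cov by blast
    then show ?thesis
    proof (elim disjE)
      assume "v \<in> P1" then show ?thesis using that[of h1] h1 by simp
    next
      assume "v \<in> P2" then show ?thesis using that[of h2] h2 by simp
    next
      assume "v \<in> P3" then show ?thesis using that[of h3] h3 by simp
    qed
  qed
  define k1 where "k1 = (if P1 = {} then h0 else h1)"
  define k2 where "k2 = (if P2 = {} then h0 else h2)"
  define k3 where "k3 = (if P3 = {} then h0 else h3)"
  have ac1: "affine_component f P1 k1" unfolding k1_def affine_component_def using h0 h1 by auto
  have ac2: "affine_component f P2 k2" unfolding k2_def affine_component_def using h0 h2 by auto
  have ac3: "affine_component f P3 k3" unfolding k3_def affine_component_def using h0 h3 by auto
  have kv1: "k1 v = f v" unfolding k1_def using h0 hv1 by auto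
  have kv2: "k2 v = f v" unfolding k2_def using h0 hv2 by auto
  have kv3: "k3 v = f v" unfolding k3_def using h0 hv3 by auto
  obtain a1 b1 c1 where co1: "\<forall>x. k1 x = a1 * fst x + b1 * snd x + c1"
    using ac1 unfolding affine_component_def affine_fun_def by blast
  obtain a2 b2 c2 where co2: "\<forall>x. k2 x = a2 * fst x + b2 * snd x + c2"
    using ac2 unfolding affine_component_def affine_fun_def by blast
  obtain a3 b3 c3 where co3: "\<forall>x. k3 x = a3 * fst x + b3 * snd x + c3"
    using ac3 unfolding affine_component_def affine_fun_def by blast
  have on1: "\<forall>x\<in>P1. f x = k1 x" using ac1 unfolding affine_component_def by blast
  have on2: "\<forall>x\<in>P2. f x = k2 x" using ac2 unfolding affine_component_def by blast
  have on3: "\<forall>x\<in>P3. f x = k3 x" using ac3 unfolding affine_component_def by blast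
  have conn: "connected (interior P2)" using poly_2 adm_3[OF adm] P2in by blast
  have cont: "continuous_on UNIV f" by (rule adm_1[OF adm])
  obtain s1 s2 i1 i2 i3 where s: "s1 \<in> {-1,1}" "s2 \<in> {-1,1}" and ii: "i1\<in>{0,1,2::nat}" "i2\<in>{0,1,2::nat}" "i3\<in>{0,1,2::nat}"
    and rep: "\<forall>x. f x = phi s1 s2 (sel3 k1 k2 k3 i1 x) (sel3 k1 k2 k3 i2 x) (sel3 k1 k2 k3 i3 x)"
    using abstract_main[OF cont co1 co2 co3 kv1 kv2 kv3 cov on1 on2 on3 conn] by blast
  define K where "K i = sel3 k1 k2 k3 i" for i
  have Kc: "\<exists>P\<in>\<P>. affine_component f P (K i)" for i
  proof -
    have "K i = k1 \<or> K i = k2 \<or> K i = k3" unfolding K_def sel3_def by (auto simp: fun_eq_iff)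
    then show ?thesis using ac1 ac2 ac3 P1in P2in P3in by blast
  qed
  have gp: "\<exists>P\<in>\<P>. \<exists>h s'. affine_component f P h \<and> s' \<in> {-1, 1::real} \<and> (\<lambda>x. s * K i x) = (\<lambda>x. s' * h x)"
    if "s \<in> {-1, 1}" for s :: real and i
    using Kc[of i] that by blast
  have s12: "s1 * s2 \<in> {-1, 1}" using s by auto
  show ?thesis
  proof (intro exI conjI)
    show "s1 \<in> {-1, 1}" "s2 \<in> {-1, 1}" using s by auto
    show "\<forall>g\<in>{(\<lambda>x. s1 * K i1 x), (\<lambda>x. s1 * s2 * K i2 x), (\<lambda>x. s1 * s2 * K i3 x)}.
      \<exists>P\<in>\<P>. \<exists>h s. affine_component f P h \<and> s \<in> {-1, 1::real} \<and> g = (\<lambda>x. s * h x)"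
      using gp[OF s(1), of i1] gp[OF s12, of i2] gp[OF s12, of i3] by blast
    show "\<forall>x. f x = s1 * max (s1 * K i1 x) (s2 * max (s1 * s2 * K i2 x) (s1 * s2 * K i3 x))"
      using rep unfolding K_def phi_def by simp
  qed
qed


end
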